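(* Let $\bm{X}=(E,M_1,\ldots,M_d,Y)^\top=(X_0,\ldots,X_{d+1})^\top$ satisfy $\bm{X}-\bm{\mu}_0=\bm{W}_0(\bm{X}-\bm{\mu}_0)+\bm{\varepsilon}$ with $\bm{\mu}_0=\mathrm{E}(\bm{X})$, where $\bm{W}_0$ is a real $(d+2)\times(d+2)$ matrix and $\bm{\varepsilon}=(\varepsilon_0,\ldots,\varepsilon_{d+1})^\top$ is mean zero, and suppose: (A1) the directed graph of $\bm{W}_0$ is acyclic; (A2) no mediator $M_i$ is a direct cause of $E$, and $Y$ is a direct cause of neither $E$ nor any $M_i$ (i.e. the first row and last column of $\bm{W}_0$ are zero); (A3$^*$) $\varepsilon_0,\ldots,\varepsilon_{d+1}$ are jointly normal and independent, and $\mathrm{Var}(\varepsilon_1)=\cdots=\mathrm{Var}(\varepsilon_d)=\sigma_*^2$ for some constant $\sigma_*>0$. Then $\bm{W}_0$ is identifiable from the joint distribution of $\bm{X}$: any matrix satisfying (A1), (A2) and (A3$^*$) (for some mean vector, error vector and $\sigma_*$) and generating the same joint distribution of $\bm{X}$ equals $\bm{W}_0$.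
   Context: Matrices are indexed from $0$. The directed graph of $\bm{W}_0$ has vertices $X_0,\ldots,X_{d+1}$ and an arrow $X_i\to X_j$ iff $W_{0,j,i}\neq0$; $X_i$ is a direct cause of $X_j$ iff $W_{0,j,i}\neq 0$. The variances of $\varepsilon_0$ and $\varepsilon_{d+1}$ are not required to equal $\sigma_*^2$. *)

theory Defs
  imports "HOL-Probability.Probability"
begin

text \<open>Variables are indexed 0..d+1 (n = d+2): X_0 = E, X_1..X_d = mediators, X_(d+1) = Y.
  Random vectors are functions 'a => nat => real, only indices < d+2 are meaningful.
  Matrices are nat => nat => real, W j i is the entry in row j, column i.\<close>

definition graph_of :: "nat \<Rightarrow> (nat \<Rightarrow> nat \<Rightarrow> real) \<Rightarrow> (nat \<times> nat) set" where
  "graph_of n W = {(i, j). i < n \<and> j < n \<and> W j i \<noteq> 0}"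

definition A1 :: "nat \<Rightarrow> (nat \<Rightarrow> nat \<Rightarrow> real) \<Rightarrow> bool" where
  "A1 d W \<longleftrightarrow> acyclic (graph_of (d + 2) W)"

definition A2 :: "nat \<Rightarrow> (nat \<Rightarrow> nat \<Rightarrow> real) \<Rightarrow> bool" where
  "A2 d W \<longleftrightarrow> (\<forall>i < d + 2. W 0 i = 0) \<and> (\<forall>j < d + 2. W j (d + 1) = 0)"

definition law :: "'a measure \<Rightarrow> nat \<Rightarrow> ('a \<Rightarrow> nat \<Rightarrow> real) \<Rightarrow> (nat \<Rightarrow> real) measure" where
  "law M d X = distr M (PiM {..<d + 2} (\<lambda>_. borel)) (\<lambda>\<omega>. restrict (X \<omega>) {..<d + 2})"

definition sem_model ::
  "'a measure \<Rightarrow> nat \<Rightarrow> (nat \<Rightarrow> nat \<Rightarrow> real) \<Rightarrow> ('a \<Rightarrow> nat \<Rightarrow> real) \<Rightarrow> ('a \<Rightarrow> nat \<Rightarrow> real)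
     \<Rightarrow> (nat \<Rightarrow> real) \<Rightarrow> real \<Rightarrow> bool" where
  "sem_model M d W X \<epsilon> s \<sigma> \<longleftrightarrow>
     prob_space M \<and>
     (\<forall>j < d + 2. (\<lambda>\<omega>. X \<omega> j) \<in> borel_measurable M) \<and>
     (\<forall>\<omega> \<in> space M. \<forall>j < d + 2.
        X \<omega> j - prob_space.expectation M (\<lambda>\<omega>'. X \<omega>' j)
          = (\<Sum>i < d + 2. W j i * (X \<omega> i - prob_space.expectation M (\<lambda>\<omega>'. X \<omega>' i))) + \<epsilon> \<omega> j) \<and>
     A1 d W \<and> A2 d W \<and>
     prob_space.indep_vars M (\<lambda>_. borel) (\<lambda>i \<omega>. \<epsilon> \<omega> i) {..<d + 2} \<and>
     (\<forall>i < d + 2. s i > 0 \<and> distributed M lborel (\<lambda>\<omega>. \<epsilon> \<omega> i) (normal_density 0 (s i))) \<and>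
     \<sigma> > 0 \<and> (\<forall>i. 1 \<le> i \<and> i \<le> d \<longrightarrow> s i = \<sigma>)"

end

theory Submission
  imports Defs
begin


definition Qf :: "(nat \<Rightarrow> nat \<Rightarrow> real) \<Rightarrow> nat \<Rightarrow> (nat \<Rightarrow> real) \<Rightarrow> (nat \<Rightarrow> real) \<Rightarrow> real" where
  "Qf S n a b = (\<Sum>i<n. \<Sum>k<n. a i * b k * S i k)"

definition uv :: "(nat \<Rightarrow> nat \<Rightarrow> real) \<Rightarrow> nat \<Rightarrow> nat \<Rightarrow> real" where
  "uv W j = (\<lambda>i. (if i = j then 1 else 0) - W j i)"

definition dl :: "nat \<Rightarrow> nat \<Rightarrow> real" where
  "dl k = (\<lambda>i. if i = k then 1 else 0)"

definition hyp :: "(nat \<Rightarrow> nat \<Rightarrow> real) \<Rightarrow> nat \<Rightarrow> (nat \<Rightarrow> nat \<Rightarrow> real) \<Rightarrow> (nat \<Rightarrow> real) \<Rightarrow> real \<Rightarrow> bool" where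
  "hyp S d W s \<sigma> \<longleftrightarrow> A1 d W \<and> A2 d W \<and>
     (\<forall>j<d+2. \<forall>i<d+2. (j,i) \<notin> (graph_of (d+2) W)\<^sup>* \<longrightarrow> Qf S (d+2) (uv W j) (dl i) = 0) \<and>
     (\<forall>j<d+2. Qf S (d+2) (uv W j) (uv W j) = (s j)\<^sup>2 \<and> s j > 0) \<and>
     (\<forall>j. 1 \<le> j \<and> j \<le> d \<longrightarrow> s j = \<sigma>)"

definition closedset :: "nat \<Rightarrow> (nat \<Rightarrow> nat \<Rightarrow> real) \<Rightarrow> nat set \<Rightarrow> bool" where
  "closedset n W T \<longleftrightarrow> (\<forall>j\<in>T. \<forall>i<n. W j i \<noteq> 0 \<longrightarrow> i \<in> T)"

lemma Qf_add_left: "Qf S n (\<lambda>i. a i + b i) c = Qf S n a c + Qf S n b c"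
  unfolding Qf_def by (simp add: algebra_simps sum.distrib)
lemma Qf_add_right: "Qf S n c (\<lambda>i. a i + b i) = Qf S n c a + Qf S n c b"
  unfolding Qf_def by (simp add: algebra_simps sum.distrib)
lemma Qf_diff_left: "Qf S n (\<lambda>i. a i - b i) c = Qf S n a c - Qf S n b c"
  unfolding Qf_def by (simp add: algebra_simps sum_subtractf)
lemma Qf_scale_left: "Qf S n (\<lambda>i. t * a i) c = t * Qf S n a c"
  unfolding Qf_def by (simp add: algebra_simps sum_distrib_left)
lemma Qf_scale_right: "Qf S n c (\<lambda>i. t * a i) = t * Qf S n c a"
  unfolding Qf_def by (simp add: algebra_simps sum_distrib_left)
lemma Qf_sym: "(\<And>i k. S i k = S k i) \<Longrightarrow> Qf S n a b = Qf S n b a"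
  unfolding Qf_def by (subst sum.swap) (simp add: algebra_simps)
lemma Qf_expand_right: "Qf S n a b = (\<Sum>k<n. b k * Qf S n a (dl k))"
proof -
  have "Qf S n a (dl k) = (\<Sum>i<n. a i * S i k)" if "k < n" for k
  proof -
    have "(\<Sum>j<n. a i * dl k j * S i j) = a i * S i k" for i
    proof -
      have "(\<Sum>j<n. a i * dl k j * S i j) = (\<Sum>j<n. if j = k then a i * S i j else 0)"
        by (rule sum.cong) (auto simp: dl_def)
      also have "\<dots> = a i * S i k" using that by simp
      finally show ?thesis .
    qed
    then show ?thesis unfolding Qf_def by simp
  qed
  then have "(\<Sum>k<n. b k * Qf S n a (dl k)) = (\<Sum>k<n. b k * (\<Sum>i<n. a i * S i k))"
    by simp
  also have "\<dots> = Qf S n a b" unfolding Qf_def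
    by (subst sum.swap) (simp add: sum_distrib_left algebra_simps)
  finally show ?thesis by simp
qed

lemma Qf_CS:
  assumes sym: "\<And>i k. S i k = S k i" and psd: "\<And>a. 0 \<le> Qf S n a a" and z: "Qf S n a a = 0"
  shows "Qf S n a b = 0"
proof -
  define c where "c = Qf S n a b"
  define q where "q = Qf S n b b"
  have q0: "0 \<le> q" using psd q_def by simp
  have key: "0 \<le> 2 * t * c + t^2 * q" for t
  proof -
    have "Qf S n (\<lambda>i. a i + t * b i) (\<lambda>i. a i + t * b i) = 2 * t * c + t^2 * q"
      unfolding c_def q_def
      by (simp add: Qf_add_left Qf_add_right Qf_scale_left Qf_scale_right z Qf_sym[OF sym, where n=n and a=b and b=a]
          power2_eq_square algebra_simps)
    then show ?thesis using psd by metis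
  qed
  define t where "t = - c / (q+1)"
  have qp: "q + 1 \<noteq> 0" using q0 by simp
  have e1: "(q+1)^2 * (2 * t * c) = -(2 * c^2 * (q+1))"
    unfolding t_def using qp by (simp add: power2_eq_square field_simps)
  have e2: "(q+1)^2 * (t^2 * q) = c^2 * q"
  proof -
    have "t^2 = c^2 / (q+1)^2" unfolding t_def by (simp add: power_divide)
    then show ?thesis using qp by simp
  qed
  have "0 \<le> (q+1)^2 * (2 * t * c + t^2 * q)" using key[of t] by simp
  also have "\<dots> = -(c^2 * (q + 2))" unfolding distrib_left e1 e2 by (simp add: algebra_simps)
  finally have "c^2 * (q+2) \<le> 0" by simp
  moreover have "0 \<le> c^2 * (q+2)" using q0 by simp
  ultimately have "c^2 * (q+2) = 0" by linarith
  then have "c^2 \<le> 0" using q0 by simp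
  then show ?thesis unfolding c_def by simp
qed

lemma Qf_diff_right: "Qf S n c (\<lambda>i. a i - b i) = Qf S n c a - Qf S n c b"
  unfolding Qf_def by (simp add: algebra_simps sum_subtractf)

lemma parent_nd:
  assumes "acyclic (graph_of n W)" "W j i \<noteq> 0" "i < n" "j < n"
  shows "(j,i) \<notin> (graph_of n W)\<^sup>*"
proof
  assume "(j,i) \<in> (graph_of n W)\<^sup>*"
  moreover have "(i,j) \<in> graph_of n W" using assms by (simp add: graph_of_def)
  ultimately have "(i,i) \<in> (graph_of n W)\<^sup>+" by (simp add: rtrancl_into_trancl2)
  then show False using assms(1) by (simp add: acyclic_def)
qed

lemma closed_nd:
  assumes "closedset n W T" "j \<notin> T" "i \<in> T"
  shows "(j,i) \<notin> (graph_of n W)\<^sup>*"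
proof
  assume "(j,i) \<in> (graph_of n W)\<^sup>*"
  then have "j \<in> T"
  proof (induction rule: converse_rtrancl_induct)
    case base then show ?case using assms by simp
  next
    case (step x y) then show ?case using assms(1) by (auto simp: closedset_def graph_of_def)
  qed
  then show False using assms by simp
qed

lemma sink_nd:
  assumes "A2 d W" "k \<noteq> d+1"
  shows "(d+1,k) \<notin> (graph_of (d+2) W)\<^sup>*"
proof
  assume "(d+1,k) \<in> (graph_of (d+2) W)\<^sup>*"
  from rtranclD[OF this] assms(2) have "(d+1,k) \<in> (graph_of (d+2) W)\<^sup>+" by simp
  from tranclD[OF this] obtain z where "(d+1,z) \<in> graph_of (d+2) W" by blast
  then show False using assms(1) by (auto simp: graph_of_def A2_def)
qed

lemma Qnd:
  assumes "hyp S d W s \<sigma>" "j < d+2" "\<And>k. k < d+2 \<Longrightarrow> v k \<noteq> 0 \<Longrightarrow> (j,k) \<notin> (graph_of (d+2) W)\<^sup>*"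
  shows "Qf S (d+2) (uv W j) v = 0"
proof -
  have "(\<Sum>k<d+2. v k * Qf S (d+2) (uv W j) (dl k)) = 0"
  proof (rule sum.neutral, rule ballI)
    fix k assume k: "k \<in> {..<d+2}"
    show "v k * Qf S (d+2) (uv W j) (dl k) = 0"
    proof (cases "v k = 0")
      case False
      then have "(j,k) \<notin> (graph_of (d+2) W)\<^sup>*" using assms(3) k by simp
      then show ?thesis using assms(1,2) k by (simp add: hyp_def)
    qed simp
  qed
  moreover have "Qf S (d+2) (uv W j) v = (\<Sum>k<d+2. v k * Qf S (d+2) (uv W j) (dl k))"
    by (rule Qf_expand_right)
  ultimately show ?thesis by simp
qed

lemma Qdiag:
  assumes H: "hyp S d W s \<sigma>" and j: "j < d+2"
  shows "Qf S (d+2) (uv W j) (dl j) = (s j)^2"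
proof -
  have u: "(\<lambda>i. dl j i - W j i) = uv W j" by (simp add: uv_def dl_def)
  have ac: "acyclic (graph_of (d+2) W)" using H by (simp add: hyp_def A1_def)
  have "Qf S (d+2) (uv W j) (\<lambda>i. W j i) = 0"
    by (rule Qnd[OF H j]) (use parent_nd[OF ac] j in auto)
  moreover have "Qf S (d+2) (uv W j) (uv W j) = (s j)^2" using H j by (simp add: hyp_def)
  ultimately show ?thesis
    using Qf_diff_right[of S "d+2" "uv W j" "dl j" "\<lambda>i. W j i", unfolded u] by simp
qed

lemma Qdef:
  assumes H: "hyp S d W s \<sigma>" and sym: "\<And>i k. S i k = S k i" and psd: "\<And>a. 0 \<le> Qf S (d+2) a a"
    and z: "Qf S (d+2) a a = 0" and i: "i < d+2"
  shows "a i = 0"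
proof (rule ccontr)
  assume ai: "a i \<noteq> 0"
  let ?G = "graph_of (d+2) W"
  have fin: "finite ?G"
    by (rule finite_subset[of _ "{..<d+2}\<times>{..<d+2}"]) (auto simp: graph_of_def)
  have ac: "acyclic ?G" using H by (simp add: hyp_def A1_def)
  have "wf (?G\<inverse>)" using finite_acyclic_wf_converse[OF fin ac] .
  then have wfR: "wf ((?G\<^sup>+)\<inverse>)" using wf_trancl trancl_converse by metis
  have iA: "i \<in> {i. i < d+2 \<and> a i \<noteq> 0}" using ai i by simp
  obtain z where zA: "z \<in> {i. i < d+2 \<and> a i \<noteq> 0}"
    and zmin: "\<And>y. (y,z) \<in> (?G\<^sup>+)\<inverse> \<Longrightarrow> y \<notin> {i. i < d+2 \<and> a i \<noteq> 0}"
    by (rule wfE_min[OF wfR iA]) blast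
  have "Qf S (d+2) (uv W z) a = Qf S (d+2) a (uv W z)" by (rule Qf_sym[OF sym])
  also have "\<dots> = 0" using Qf_CS[OF sym psd z] .
  finally have q0: "Qf S (d+2) (uv W z) a = 0" .
  have "Qf S (d+2) (uv W z) a = (\<Sum>k<d+2. a k * Qf S (d+2) (uv W z) (dl k))"
    by (rule Qf_expand_right)
  also have "\<dots> = (\<Sum>k<d+2. if k = z then a z * (s z)^2 else 0)"
  proof (rule sum.cong[OF refl])
    fix k assume k: "k \<in> {..<d+2}"
    show "a k * Qf S (d+2) (uv W z) (dl k) = (if k = z then a z * (s z)^2 else 0)"
    proof (cases "k = z")
      case True then show ?thesis using Qdiag[OF H] zA by simp
    next
      case False
      show ?thesis
      proof (cases "a k = 0")
        case False
        then have "(z,k) \<notin> ?G\<^sup>+" using zmin[of k] k by auto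
        then have "(z,k) \<notin> ?G\<^sup>*" using \<open>k \<noteq> z\<close> rtranclD[of z k ?G] by blast
        then show ?thesis using H zA k \<open>k \<noteq> z\<close> by (simp add: hyp_def)
      qed (simp add: \<open>k \<noteq> z\<close>)
    qed
  qed
  also have "\<dots> = a z * (s z)^2" using zA by simp
  finally have "a z * (s z)^2 = 0" using q0 by simp
  moreover have "s z > 0" using H zA by (simp add: hyp_def)
  ultimately show False using zA by simp
qed

lemma half:
  assumes H: "hyp S d W s \<sigma>" and H': "hyp S d W' s' \<sigma>'"
    and sym: "\<And>i k. S i k = S k i" and psd: "\<And>a. 0 \<le> Qf S (d+2) a a"
    and T: "closedset (d+2) W' T" and jT: "j \<notin> T" and j1: "1 \<le> j" and jd: "j \<le> d"
    and par: "\<And>i. i < d+2 \<Longrightarrow> W j i \<noteq> 0 \<Longrightarrow> i \<in> T"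
  shows "\<sigma>'^2 \<le> \<sigma>^2 \<and> (\<sigma>'^2 = \<sigma>^2 \<longrightarrow> (\<forall>i<d+2. W' j i = W j i))"
proof -
  define v where "v = (\<lambda>i. W' j i - W j i)"
  have j: "j < d+2" using jd by simp
  have ac': "acyclic (graph_of (d+2) W')" using H' by (simp add: hyp_def A1_def)
  have u: "uv W j = (\<lambda>i. uv W' j i + v i)" by (auto simp: uv_def v_def)
  have Q0: "Qf S (d+2) (uv W' j) v = 0"
  proof (rule Qnd[OF H' j])
    fix k assume k: "k < d+2" and vk: "v k \<noteq> 0"
    then have "W' j k \<noteq> 0 \<or> W j k \<noteq> 0" by (auto simp: v_def)
    then show "(j,k) \<notin> (graph_of (d+2) W')\<^sup>*"
    proof
      assume "W' j k \<noteq> 0" then show ?thesis using parent_nd[OF ac' _ k j] by simp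
    next
      assume "W j k \<noteq> 0" then have "k \<in> T" using par k by simp
      then show ?thesis using closed_nd[OF T jT] by simp
    qed
  qed
  have Q0': "Qf S (d+2) v (uv W' j) = 0"
    using Q0 Qf_sym[OF sym, where n="d+2" and a=v and b="uv W' j"] by simp
  have "Qf S (d+2) (uv W j) (uv W j) = Qf S (d+2) (uv W' j) (uv W' j) + Qf S (d+2) v v"
    unfolding u Qf_add_left Qf_add_right Q0 Q0' by simp
  moreover have "Qf S (d+2) (uv W j) (uv W j) = \<sigma>^2" using H j j1 jd by (simp add: hyp_def)
  moreover have "Qf S (d+2) (uv W' j) (uv W' j) = \<sigma>'^2" using H' j j1 jd by (simp add: hyp_def)
  moreover have "0 \<le> Qf S (d+2) v v" by (rule psd)
  ultimately have eq: "\<sigma>^2 = \<sigma>'^2 + Qf S (d+2) v v" and "\<sigma>'^2 \<le> \<sigma>^2" by auto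
  moreover have "\<forall>i<d+2. W' j i = W j i" if "\<sigma>'^2 = \<sigma>^2"
  proof (intro allI impI)
    fix i assume i: "i < d+2"
    have "Qf S (d+2) v v = 0" using eq that by simp
    then have "v i = 0" using Qdef[OF H sym psd _ i] by simp
    then show "W' j i = W j i" by (simp add: v_def)
  qed
  ultimately show ?thesis by blast
qed

lemma Yrow:
  assumes H: "hyp S d W s \<sigma>" and H': "hyp S d W' s' \<sigma>'"
    and sym: "\<And>i k. S i k = S k i" and psd: "\<And>a. 0 \<le> Qf S (d+2) a a"
  shows "\<forall>i<d+2. W' (d+1) i = W (d+1) i"
proof -
  define v where "v = (\<lambda>i. W' (d+1) i - W (d+1) i)"
  have j: "d+1 < d+2" by simp
  have A2: "A2 d W" "A2 d W'" using H H' by (simp_all add: hyp_def)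
  have vY: "v (d+1) = 0" using A2 by (simp add: v_def A2_def)
  have supp: "k \<noteq> d+1" if "v k \<noteq> 0" for k using that vY by auto
  have Q0: "Qf S (d+2) (uv W (d+1)) v = 0"
    by (rule Qnd[OF H j]) (use sink_nd[OF A2(1)] supp in auto)
  have Q0': "Qf S (d+2) (uv W' (d+1)) v = 0"
    by (rule Qnd[OF H' j]) (use sink_nd[OF A2(2)] supp in auto)
  have u: "v = (\<lambda>i. uv W (d+1) i - uv W' (d+1) i)" by (auto simp: uv_def v_def)
  have "Qf S (d+2) v v = Qf S (d+2) (uv W (d+1)) v - Qf S (d+2) (uv W' (d+1)) v"
    by (subst (1) u) (rule Qf_diff_left)
  then have "Qf S (d+2) v v = 0" using Q0 Q0' by simp
  then have "v i = 0" if "i < d+2" for i using Qdef[OF H sym psd _ that] by simp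
  then show ?thesis by (simp add: v_def)
qed

lemma induct_rows:
  assumes H: "hyp S d W s \<sigma>" and H': "hyp S d W' s' \<sigma>'"
    and sym: "\<And>i k. S i k = S k i" and psd: "\<And>a. 0 \<le> Qf S (d+2) a a"
  shows "\<forall>T. card ({..d} - T) = m \<longrightarrow> T \<subseteq> {..d} \<longrightarrow> 0 \<in> T \<longrightarrow> closedset (d+2) W T
    \<longrightarrow> closedset (d+2) W' T \<longrightarrow> (\<forall>j\<in>T. \<forall>i<d+2. W' j i = W j i) \<longrightarrow> (\<forall>j\<le>d. \<forall>i<d+2. W' j i = W j i)"
proof (induction m)
  case 0
  show ?case
  proof (rule allI, intro impI)
    fix T assume c: "card ({..d} - T) = 0" and Td: "T \<subseteq> {..d}" and "0 \<in> T"
      and "closedset (d+2) W T" "closedset (d+2) W' T" and rows: "\<forall>j\<in>T. \<forall>i<d+2. W' j i = W j i"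
    have "{..d} - T = {}" using c by (auto simp: card_eq_0_iff)
    then show "\<forall>j\<le>d. \<forall>i<d+2. W' j i = W j i" using rows by auto
  qed
next
  case (Suc m)
  show ?case
  proof (rule allI, intro impI)
    fix T assume c: "card ({..d} - T) = Suc m" and Td: "T \<subseteq> {..d}" and T0: "0 \<in> T"
      and cW: "closedset (d+2) W T" and cW': "closedset (d+2) W' T"
      and rows: "\<forall>j\<in>T. \<forall>i<d+2. W' j i = W j i"
    let ?R = "{..d} - T"
    have "?R \<noteq> {}" using c by (metis card.empty nat.distinct(1))
    then obtain x where x: "x \<in> ?R" by blast
    have fin: "finite (graph_of (d+2) V)" for V
      by (rule finite_subset[of _ "{..<d+2}\<times>{..<d+2}"]) (auto simp: graph_of_def)
    have wf: "wf (graph_of (d+2) W)" "wf (graph_of (d+2) W')"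
      using finite_acyclic_wf[OF fin] H H' by (auto simp: hyp_def A1_def)
    obtain j where jR: "j \<in> ?R" and jmin: "\<And>y. (y,j) \<in> graph_of (d+2) W \<Longrightarrow> y \<notin> ?R"
      by (rule wfE_min[OF wf(1) x]) blast
    obtain k where kR: "k \<in> ?R" and kmin: "\<And>y. (y,k) \<in> graph_of (d+2) W' \<Longrightarrow> y \<notin> ?R"
      by (rule wfE_min[OF wf(2) x]) blast
    have A2: "A2 d W" "A2 d W'" using H H' by (simp_all add: hyp_def)
    have parj: "i \<in> T" if "i < d+2" "W j i \<noteq> 0" for i
    proof -
      have "i \<noteq> d+1" using A2(1) jR that by (auto simp: A2_def)
      moreover have "i \<notin> ?R" using jmin[of i] that jR by (auto simp: graph_of_def)
      ultimately show ?thesis using that by auto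
    qed
    have park: "i \<in> T" if "i < d+2" "W' k i \<noteq> 0" for i
    proof -
      have "i \<noteq> d+1" using A2(2) kR that by (auto simp: A2_def)
      moreover have "i \<notin> ?R" using kmin[of i] that kR by (auto simp: graph_of_def)
      ultimately show ?thesis using that by auto
    qed
    have j0: "j \<noteq> 0"
    proof
      assume "j = 0" then show False using jR T0 by simp
    qed
    have k0: "k \<noteq> 0"
    proof
      assume "k = 0" then show False using kR T0 by simp
    qed
    have j1: "1 \<le> j" "j \<le> d" "j \<notin> T" using jR j0 by auto
    have k1: "1 \<le> k" "k \<le> d" "k \<notin> T" using kR k0 by auto
    note h1 = half[OF H H' sym psd cW' j1(3) j1(1) j1(2) parj]
    note h2 = half[OF H' H sym psd cW k1(3) k1(1) k1(2) park]
    have "\<sigma>^2 \<le> \<sigma>'^2" using h2 by blast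
    then have rowj: "\<forall>i<d+2. W' j i = W j i" using h1 by auto
    define T' where "T' = insert j T"
    have "card ({..d} - T') = m"
    proof -
      have "{..d} - T' = ({..d} - T) - {j}" by (auto simp: T'_def)
      then show ?thesis using c jR by simp
    qed
    moreover have "T' \<subseteq> {..d}" "0 \<in> T'" using Td T0 j1 by (auto simp: T'_def)
    moreover have "closedset (d+2) W T'" using cW parj by (auto simp: closedset_def T'_def)
    moreover have "closedset (d+2) W' T'" using cW' parj rowj by (auto simp: closedset_def T'_def)
    moreover have "\<forall>j\<in>T'. \<forall>i<d+2. W' j i = W j i" using rows rowj by (auto simp: T'_def)
    ultimately show "\<forall>j\<le>d. \<forall>i<d+2. W' j i = W j i" using Suc.IH by blast
  qed
qed

lemma core:
  assumes H: "hyp S d W s \<sigma>" and H': "hyp S d W' s' \<sigma>'"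
    and sym: "\<And>i k. S i k = S k i" and psd: "\<And>a. 0 \<le> Qf S (d+2) a a"
  shows "\<forall>j<d+2. \<forall>i<d+2. W' j i = W j i"
proof -
  have A2: "A2 d W" "A2 d W'" using H H' by (simp_all add: hyp_def)
  have c0: "closedset (d+2) W {0}" "closedset (d+2) W' {0}" using A2 by (simp_all add: closedset_def A2_def)
  have r0: "\<forall>j\<in>{0}. \<forall>i<d+2. W' j i = W j i" using A2 by (simp add: A2_def)
  have rd: "\<forall>j\<le>d. \<forall>i<d+2. W' j i = W j i"
    using induct_rows[OF H H' sym psd, of "card ({..d} - {0})", THEN spec[of _ "{0}"]] c0 r0 by simp
  have ry: "\<forall>i<d+2. W' (d+1) i = W (d+1) i" by (rule Yrow[OF H H' sym psd])
  show ?thesis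
  proof (intro allI impI)
    fix j i assume "j < d+2" "i < d+2"
    then have "j \<le> d \<or> j = d+1" by auto
    then show "W' j i = W j i" using rd ry \<open>i < d+2\<close> by auto
  qed
qed



lemma repr_gen:
  fixes Z eps :: "'a \<Rightarrow> nat \<Rightarrow> real"
  assumes eq: "\<forall>\<omega>\<in>space M. \<forall>j<n. Z \<omega> j = (\<Sum>i<n. W j i * Z \<omega> i) + eps \<omega> j"
    and ac: "acyclic (graph_of n W)"
  shows "i < n \<longrightarrow> (\<exists>c. (\<forall>\<omega>\<in>space M. Z \<omega> i = (\<Sum>l<n. c l * eps \<omega> l)) \<and>
                           (\<forall>l<n. c l \<noteq> 0 \<longrightarrow> (l,i) \<in> (graph_of n W)\<^sup>*))"
proof -
  let ?G = "graph_of n W"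
  have fin: "finite ?G" by (rule finite_subset[of _ "{..<n}\<times>{..<n}"]) (auto simp: graph_of_def)
  have wf: "wf ?G" using finite_acyclic_wf[OF fin ac] .
  show ?thesis
  proof (induction i rule: wf_induct_rule[OF wf])
    case (1 i)
    show ?case
    proof
      assume i: "i < n"
      have "\<forall>k. \<exists>c. k < n \<and> W i k \<noteq> 0 \<longrightarrow> (\<forall>\<omega>\<in>space M. Z \<omega> k = (\<Sum>l<n. c l * eps \<omega> l)) \<and>
                           (\<forall>l<n. c l \<noteq> 0 \<longrightarrow> (l,k) \<in> ?G\<^sup>*)"
      proof
        fix k
        show "\<exists>c. k < n \<and> W i k \<noteq> 0 \<longrightarrow> (\<forall>\<omega>\<in>space M. Z \<omega> k = (\<Sum>l<n. c l * eps \<omega> l)) \<and>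
                           (\<forall>l<n. c l \<noteq> 0 \<longrightarrow> (l,k) \<in> ?G\<^sup>*)"
        proof (cases "k < n \<and> W i k \<noteq> 0")
          case True
          then have "(k,i) \<in> ?G" using i by (simp add: graph_of_def)
          then have "k < n \<longrightarrow> (\<exists>c. (\<forall>\<omega>\<in>space M. Z \<omega> k = (\<Sum>l<n. c l * eps \<omega> l)) \<and>
                           (\<forall>l<n. c l \<noteq> 0 \<longrightarrow> (l,k) \<in> ?G\<^sup>*))" by (rule 1)
          then show ?thesis using True by blast
        qed auto
      qed
      from choice[OF this] obtain C where C: "\<And>k. k < n \<and> W i k \<noteq> 0 \<longrightarrow> (\<forall>\<omega>\<in>space M. Z \<omega> k = (\<Sum>l<n. C k l * eps \<omega> l)) \<and>
                           (\<forall>l<n. C k l \<noteq> 0 \<longrightarrow> (l,k) \<in> ?G\<^sup>*)" by blast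
      define c where "c l = (\<Sum>k<n. W i k * C k l) + (if l = i then 1 else 0)" for l
      have "Z \<omega> i = (\<Sum>l<n. c l * eps \<omega> l)" if \<omega>: "\<omega> \<in> space M" for \<omega>
      proof -
        have "Z \<omega> i = (\<Sum>k<n. W i k * Z \<omega> k) + eps \<omega> i" using eq \<omega> i by blast
        also have "(\<Sum>k<n. W i k * Z \<omega> k) = (\<Sum>k<n. W i k * (\<Sum>l<n. C k l * eps \<omega> l))"
        proof (rule sum.cong[OF refl])
          fix k assume k: "k \<in> {..<n}"
          show "W i k * Z \<omega> k = W i k * (\<Sum>l<n. C k l * eps \<omega> l)"
            using C[of k] k \<omega> by (cases "W i k = 0") auto
        qed
        also have "\<dots> = (\<Sum>k<n. \<Sum>l<n. W i k * C k l * eps \<omega> l)"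
          by (simp add: sum_distrib_left mult.assoc)
        also have "\<dots> = (\<Sum>l<n. \<Sum>k<n. W i k * C k l * eps \<omega> l)"
          by (rule sum.swap)
        also have "\<dots> = (\<Sum>l<n. (\<Sum>k<n. W i k * C k l) * eps \<omega> l)"
          by (simp add: sum_distrib_right)
        also have "eps \<omega> i = (\<Sum>l<n. (if l = i then 1 else 0) * eps \<omega> l)"
          using i by (simp add: if_distrib[of "\<lambda>x. x * _"] cong: if_cong)
        also have "(\<Sum>l<n. (\<Sum>k<n. W i k * C k l) * eps \<omega> l) + (\<Sum>l<n. (if l = i then 1 else 0) * eps \<omega> l)
            = (\<Sum>l<n. c l * eps \<omega> l)"
          by (simp add: c_def distrib_right sum.distrib)
        finally show ?thesis .
      qed
      moreover have "(l,i) \<in> ?G\<^sup>*" if l: "l < n" and cl: "c l \<noteq> 0" for l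
      proof (cases "l = i")
        case False
        then have "(\<Sum>k<n. W i k * C k l) \<noteq> 0" using cl by (simp add: c_def)
        then obtain k where k: "k \<in> {..<n}" and nz: "W i k * C k l \<noteq> 0"
          using sum.not_neutral_contains_not_neutral by blast
        then have "(l,k) \<in> ?G\<^sup>*" using C[of k] l by simp
        moreover have "(k,i) \<in> ?G" using k nz i by (simp add: graph_of_def)
        ultimately show ?thesis by (rule rtrancl_into_rtrancl)
      qed simp
      ultimately show "\<exists>c. (\<forall>\<omega>\<in>space M. Z \<omega> i = (\<Sum>l<n. c l * eps \<omega> l)) \<and>
                           (\<forall>l<n. c l \<noteq> 0 \<longrightarrow> (l,i) \<in> ?G\<^sup>*)" by blast
    qed
  qed
qed


lemma Qf_cong: "(\<And>i k. i < n \<Longrightarrow> k < n \<Longrightarrow> S i k = S' i k) \<Longrightarrow> Qf S n a b = Qf S' n a b"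
  unfolding Qf_def by (intro sum.cong refl) auto

definition Sig :: "(nat \<Rightarrow> real) measure \<Rightarrow> nat \<Rightarrow> nat \<Rightarrow> real" where
  "Sig P i k = (\<integral>x. (x i - (\<integral>y. y i \<partial>P)) * (x k - (\<integral>y. y k \<partial>P)) \<partial>P)"

lemma Sig_sym: "Sig P i k = Sig P k i"
  unfolding Sig_def by (simp add: mult.commute)

locale semm =
  fixes M :: "'a measure" and d :: nat and W :: "nat \<Rightarrow> nat \<Rightarrow> real"
    and X \<epsilon> :: "'a \<Rightarrow> nat \<Rightarrow> real" and s :: "nat \<Rightarrow> real" and \<sigma> :: real
  assumes sem: "sem_model M d W X \<epsilon> s \<sigma>"
begin

lemma PS: "prob_space M" using sem unfolding sem_model_def by blast

sublocale prob_space M by (rule PS)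

definition Zc :: "'a \<Rightarrow> nat \<Rightarrow> real" where "Zc \<omega> j = X \<omega> j - (\<integral>\<omega>'. X \<omega>' j \<partial>M)"

lemma eqn: "\<forall>\<omega>\<in>space M. \<forall>j<d+2. Zc \<omega> j = (\<Sum>i<d+2. W j i * Zc \<omega> i) + \<epsilon> \<omega> j"
  unfolding Zc_def using sem unfolding sem_model_def by blast

lemma Wac: "acyclic (graph_of (d+2) W)" using sem unfolding sem_model_def A1_def by blast

definition C where "C i = (SOME c. (\<forall>\<omega>\<in>space M. Zc \<omega> i = (\<Sum>l<d+2. c l * \<epsilon> \<omega> l)) \<and>
    (\<forall>l<d+2. c l \<noteq> 0 \<longrightarrow> (l,i) \<in> (graph_of (d+2) W)\<^sup>*))"

lemma C_props:
  assumes "i < d+2"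
  shows "\<forall>\<omega>\<in>space M. Zc \<omega> i = (\<Sum>l<d+2. C i l * \<epsilon> \<omega> l)"
    and "\<forall>l<d+2. C i l \<noteq> 0 \<longrightarrow> (l,i) \<in> (graph_of (d+2) W)\<^sup>*"
proof -
  have "(\<forall>\<omega>\<in>space M. Zc \<omega> i = (\<Sum>l<d+2. C i l * \<epsilon> \<omega> l)) \<and>
    (\<forall>l<d+2. C i l \<noteq> 0 \<longrightarrow> (l,i) \<in> (graph_of (d+2) W)\<^sup>*)"
    unfolding C_def by (rule someI_ex[OF repr_gen[OF eqn Wac, rule_format, OF assms]])
  then show "\<forall>\<omega>\<in>space M. Zc \<omega> i = (\<Sum>l<d+2. C i l * \<epsilon> \<omega> l)"
    and "\<forall>l<d+2. C i l \<noteq> 0 \<longrightarrow> (l,i) \<in> (graph_of (d+2) W)\<^sup>*" by auto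
qed

lemma dist: "i < d+2 \<Longrightarrow> s i > 0 \<and> distributed M lborel (\<lambda>\<omega>. \<epsilon> \<omega> i) (normal_density 0 (s i))"
  using sem unfolding sem_model_def by blast

lemma indep: "indep_vars (\<lambda>_. borel) (\<lambda>i \<omega>. \<epsilon> \<omega> i) {..<d+2}"
  using sem unfolding sem_model_def by blast

lemma eps_int: "i < d+2 \<Longrightarrow> integrable M (\<lambda>\<omega>. \<epsilon> \<omega> i)"
  using distributed_integrable[OF conjunct2[OF dist], of i "\<lambda>x. x"] integrable_normal_moment_nz_1[where \<mu>=0 and \<sigma>="s i"] dist[of i]
  by auto

lemma eps_sq_int: "i < d+2 \<Longrightarrow> integrable M (\<lambda>\<omega>. (\<epsilon> \<omega> i)^2)"
  using distributed_integrable[OF conjunct2[OF dist], of i "\<lambda>x. x^2"] integrable_normal_moment[where \<mu>=0 and \<sigma>="s i" and k=2] dist[of i]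
  by auto

lemma eps_mean: "i < d+2 \<Longrightarrow> expectation (\<lambda>\<omega>. \<epsilon> \<omega> i) = 0"
  using normal_distributed_expectation[OF conjunct1[OF dist] conjunct2[OF dist]] by simp

lemma eps_var: "i < d+2 \<Longrightarrow> expectation (\<lambda>\<omega>. (\<epsilon> \<omega> i)^2) = (s i)^2"
  using normal_distributed_variance[OF conjunct1[OF dist] conjunct2[OF dist]] eps_mean by simp

lemma eps_prod:
  assumes l: "l < d+2" and m: "m < d+2"
  shows "integrable M (\<lambda>\<omega>. \<epsilon> \<omega> l * \<epsilon> \<omega> m) \<and>
         expectation (\<lambda>\<omega>. \<epsilon> \<omega> l * \<epsilon> \<omega> m) = (if l = m then (s l)^2 else 0)"
proof (cases "l = m")
  case True
  then show ?thesis using eps_sq_int[OF l] eps_var[OF l] by (simp add: power2_eq_square)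
next
  case False
  have ind: "indep_vars (\<lambda>_. borel) (\<lambda>i \<omega>. \<epsilon> \<omega> i) {l,m}"
    by (rule indep_vars_subset[OF indep]) (use l m in auto)
  have int: "\<And>i. i \<in> {l,m} \<Longrightarrow> integrable M (\<lambda>\<omega>. \<epsilon> \<omega> i)" using eps_int l m by auto
  have "(\<integral>\<omega>. (\<Prod>i\<in>{l,m}. \<epsilon> \<omega> i) \<partial>M) = (\<Prod>i\<in>{l,m}. \<integral>\<omega>. \<epsilon> \<omega> i \<partial>M)"
    by (rule indep_vars_lebesgue_integral[OF _ ind int]) simp
  moreover have "integrable M (\<lambda>\<omega>. (\<Prod>i\<in>{l,m}. \<epsilon> \<omega> i))"
    by (rule indep_vars_integrable[OF _ ind int]) simp
  ultimately show ?thesis using False eps_mean[OF l] by simp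
qed


lemma ZZ_int:
  assumes i: "i < d+2" and k: "k < d+2"
  shows "integrable M (\<lambda>\<omega>. Zc \<omega> i * Zc \<omega> k)"
proof -
  have "integrable M (\<lambda>\<omega>. \<Sum>l<d+2. \<Sum>m<d+2. C i l * C k m * (\<epsilon> \<omega> l * \<epsilon> \<omega> m))"
    by (intro Bochner_Integration.integrable_sum Bochner_Integration.integrable_mult_right) (use eps_prod in auto)
  moreover have "Zc \<omega> i * Zc \<omega> k = (\<Sum>l<d+2. \<Sum>m<d+2. C i l * C k m * (\<epsilon> \<omega> l * \<epsilon> \<omega> m))"
    if "\<omega> \<in> space M" for \<omega>
  proof -
    have "Zc \<omega> i * Zc \<omega> k = (\<Sum>l<d+2. C i l * \<epsilon> \<omega> l) * (\<Sum>m<d+2. C k m * \<epsilon> \<omega> m)"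
      using C_props(1)[OF i] C_props(1)[OF k] that by metis
    also have "\<dots> = (\<Sum>l<d+2. \<Sum>m<d+2. C i l * \<epsilon> \<omega> l * (C k m * \<epsilon> \<omega> m))"
      by (rule sum_product)
    also have "\<dots> = (\<Sum>l<d+2. \<Sum>m<d+2. C i l * C k m * (\<epsilon> \<omega> l * \<epsilon> \<omega> m))"
      by (intro sum.cong refl) (simp add: mult_ac)
    finally show ?thesis .
  qed
  ultimately show ?thesis by (subst Bochner_Integration.integrable_cong[OF refl]) auto
qed

lemma eZ:
  assumes j: "j < d+2" and i: "i < d+2"
  shows "integrable M (\<lambda>\<omega>. \<epsilon> \<omega> j * Zc \<omega> i) \<and> expectation (\<lambda>\<omega>. \<epsilon> \<omega> j * Zc \<omega> i) = C i j * (s j)^2"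
proof -
  have eq: "\<epsilon> \<omega> j * Zc \<omega> i = (\<Sum>l<d+2. C i l * (\<epsilon> \<omega> j * \<epsilon> \<omega> l))" if "\<omega> \<in> space M" for \<omega>
  proof -
    have "\<epsilon> \<omega> j * Zc \<omega> i = \<epsilon> \<omega> j * (\<Sum>l<d+2. C i l * \<epsilon> \<omega> l)"
      using C_props(1)[OF i] that by metis
    also have "\<dots> = (\<Sum>l<d+2. \<epsilon> \<omega> j * (C i l * \<epsilon> \<omega> l))" by (rule sum_distrib_left)
    also have "\<dots> = (\<Sum>l<d+2. C i l * (\<epsilon> \<omega> j * \<epsilon> \<omega> l))"
      by (intro sum.cong refl) (simp add: mult_ac)
    finally show ?thesis .
  qed
  have int: "integrable M (\<lambda>\<omega>. \<Sum>l<d+2. C i l * (\<epsilon> \<omega> j * \<epsilon> \<omega> l))"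
    by (intro Bochner_Integration.integrable_sum Bochner_Integration.integrable_mult_right) (use eps_prod j in auto)
  have "expectation (\<lambda>\<omega>. \<Sum>l<d+2. C i l * (\<epsilon> \<omega> j * \<epsilon> \<omega> l)) =
      (\<Sum>l<d+2. C i l * expectation (\<lambda>\<omega>. \<epsilon> \<omega> j * \<epsilon> \<omega> l))"
    using eps_prod j by (subst Bochner_Integration.integral_sum) auto
  also have "\<dots> = (\<Sum>l<d+2. if l = j then C i j * (s j)^2 else 0)"
    using eps_prod j by (intro sum.cong refl) auto
  also have "\<dots> = C i j * (s j)^2" using j by simp
  finally have "expectation (\<lambda>\<omega>. \<Sum>l<d+2. C i l * (\<epsilon> \<omega> j * \<epsilon> \<omega> l)) = C i j * (s j)^2" .
  moreover have "expectation (\<lambda>\<omega>. \<epsilon> \<omega> j * Zc \<omega> i) = expectation (\<lambda>\<omega>. \<Sum>l<d+2. C i l * (\<epsilon> \<omega> j * \<epsilon> \<omega> l))"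
    using eq by (rule Bochner_Integration.integral_cong[OF refl])
  moreover have "integrable M (\<lambda>\<omega>. \<epsilon> \<omega> j * Zc \<omega> i)"
    using int eq by (subst Bochner_Integration.integrable_cong[OF refl]) auto
  ultimately show ?thesis by simp
qed

definition Sg :: "nat \<Rightarrow> nat \<Rightarrow> real" where "Sg i k = expectation (\<lambda>\<omega>. Zc \<omega> i * Zc \<omega> k)"

lemma Qexp: "Qf Sg (d+2) a b = expectation (\<lambda>\<omega>. (\<Sum>i<d+2. a i * Zc \<omega> i) * (\<Sum>k<d+2. b k * Zc \<omega> k))"
proof -
  have "(\<lambda>\<omega>. (\<Sum>i<d+2. a i * Zc \<omega> i) * (\<Sum>k<d+2. b k * Zc \<omega> k)) =
        (\<lambda>\<omega>. \<Sum>i<d+2. \<Sum>k<d+2. a i * b k * (Zc \<omega> i * Zc \<omega> k))"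
    unfolding sum_product by (intro ext sum.cong refl) (simp add: mult_ac)
  moreover have "expectation (\<lambda>\<omega>. \<Sum>i<d+2. \<Sum>k<d+2. a i * b k * (Zc \<omega> i * Zc \<omega> k)) =
      (\<Sum>i<d+2. \<Sum>k<d+2. a i * b k * Sg i k)"
    unfolding Sg_def
    by (subst Bochner_Integration.integral_sum, use ZZ_int in fastforce, intro sum.cong refl,
        subst Bochner_Integration.integral_sum) (use ZZ_int in auto)
  ultimately show ?thesis by (simp add: Qf_def)
qed

lemma u_comb: "j < d+2 \<Longrightarrow> \<omega> \<in> space M \<Longrightarrow> (\<Sum>a<d+2. uv W j a * Zc \<omega> a) = \<epsilon> \<omega> j"
proof -
  assume j: "j < d+2" and w: "\<omega> \<in> space M"
  have "(\<Sum>a<d+2. uv W j a * Zc \<omega> a) = (\<Sum>a<d+2. (if a = j then Zc \<omega> a else 0)) - (\<Sum>a<d+2. W j a * Zc \<omega> a)"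
    unfolding uv_def by (simp add: left_diff_distrib sum_subtractf if_distrib[of "\<lambda>x. x * _"] cong: if_cong)
  also have "\<dots> = Zc \<omega> j - (\<Sum>a<d+2. W j a * Zc \<omega> a)"
    unfolding sum.delta[OF finite_lessThan] using j by simp
  also have "\<dots> = \<epsilon> \<omega> j"
  proof -
    have "Zc \<omega> j = (\<Sum>a<d+2. W j a * Zc \<omega> a) + \<epsilon> \<omega> j" using eqn w j by blast
    then show ?thesis by linarith
  qed
  finally show ?thesis .
qed

lemma d_comb: "i < d+2 \<Longrightarrow> (\<Sum>a<d+2. dl i a * Zc \<omega> a) = Zc \<omega> i"
  unfolding dl_def by (simp add: if_distrib[of "\<lambda>x. x * _"] cong: if_cong)

lemma psd_Sg: "0 \<le> Qf Sg (d+2) a a"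
  unfolding Qexp by simp

lemma ortho_Sg: "j < d+2 \<Longrightarrow> i < d+2 \<Longrightarrow> (j,i) \<notin> (graph_of (d+2) W)\<^sup>* \<Longrightarrow> Qf Sg (d+2) (uv W j) (dl i) = 0"
proof -
  assume j: "j < d+2" and i: "i < d+2" and nd: "(j,i) \<notin> (graph_of (d+2) W)\<^sup>*"
  have "Qf Sg (d+2) (uv W j) (dl i) = expectation (\<lambda>\<omega>. \<epsilon> \<omega> j * Zc \<omega> i)"
    unfolding Qexp by (intro Bochner_Integration.integral_cong refl) (use u_comb[OF j] d_comb[OF i] in auto)
  also have "\<dots> = C i j * (s j)^2" using eZ[OF j i] by simp
  also have "C i j = 0" using C_props(2)[OF i] j nd by blast
  finally show ?thesis by simp
qed

lemma var_Sg: "j < d+2 \<Longrightarrow> Qf Sg (d+2) (uv W j) (uv W j) = (s j)^2"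
proof -
  assume j: "j < d+2"
  have "Qf Sg (d+2) (uv W j) (uv W j) = expectation (\<lambda>\<omega>. \<epsilon> \<omega> j * \<epsilon> \<omega> j)"
    unfolding Qexp by (intro Bochner_Integration.integral_cong refl) (use u_comb[OF j] in auto)
  also have "\<dots> = (s j)^2" using eps_prod[OF j j] by simp
  finally show ?thesis .
qed


lemma Xmeas: "i < d+2 \<Longrightarrow> (\<lambda>\<omega>. X \<omega> i) \<in> borel_measurable M"
  using sem unfolding sem_model_def by blast

lemma meas_restr: "(\<lambda>\<omega>. restrict (X \<omega>) {..<d+2}) \<in> measurable M (PiM {..<d+2} (\<lambda>_. borel))"
  by (rule measurable_restrict) (use Xmeas in auto)

lemma comp_meas: "i < d+2 \<Longrightarrow> (\<lambda>x. x i) \<in> borel_measurable (PiM {..<d+2} (\<lambda>_. (borel :: real measure)))"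
  using measurable_component_singleton[of i "{..<d+2}" "\<lambda>_. (borel :: real measure)"] by simp

lemma law_mean: "i < d+2 \<Longrightarrow> (\<integral>y. y i \<partial>law M d X) = (\<integral>\<omega>. X \<omega> i \<partial>M)"
  unfolding law_def by (subst integral_distr[OF meas_restr comp_meas]) auto

lemma Sig_law:
  assumes i: "i < d+2" and k: "k < d+2"
  shows "Sig (law M d X) i k = Sg i k"
proof -
  have m: "(\<lambda>x. (x i - (\<integral>\<omega>. X \<omega> i \<partial>M)) * (x k - (\<integral>\<omega>. X \<omega> k \<partial>M))) \<in> borel_measurable (PiM {..<d+2} (\<lambda>_. (borel :: real measure)))"
    using comp_meas[OF i] comp_meas[OF k] by measurable
  show ?thesis
    unfolding Sig_def law_mean[OF i] law_mean[OF k] Sg_def Zc_def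
    unfolding law_def using i k by (subst integral_distr[OF meas_restr m]) auto
qed

lemma model_hyp: "hyp (Sig (law M d X)) d W s \<sigma> \<and> (\<forall>a. 0 \<le> Qf (Sig (law M d X)) (d+2) a a)"
proof -
  have QQ: "Qf (Sig (law M d X)) (d+2) a b = Qf Sg (d+2) a b" for a b
    by (rule Qf_cong) (rule Sig_law)
  have A: "A1 d W" "A2 d W" "\<forall>j. 1 \<le> j \<and> j \<le> d \<longrightarrow> s j = \<sigma>"
    using sem unfolding sem_model_def by blast+
  show ?thesis
    unfolding hyp_def QQ using A ortho_Sg var_Sg dist psd_Sg by auto
qed

end

lemma main_result:
  assumes "sem_model M d W X \<epsilon> s \<sigma>"
    and "sem_model M' d W' X' \<epsilon>' s' \<sigma>'"
    and "law M d X = law M' d X'"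
  shows "\<forall>j < d + 2. \<forall>i < d + 2. W' j i = W j i"
proof -
  interpret m1: semm M d W X \<epsilon> s \<sigma> by unfold_locales (rule assms(1))
  interpret m2: semm M' d W' X' \<epsilon>' s' \<sigma>' by unfold_locales (rule assms(2))
  have H: "hyp (Sig (law M d X)) d W s \<sigma>" and psd: "\<And>a. 0 \<le> Qf (Sig (law M d X)) (d+2) a a"
    using m1.model_hyp by auto
  have H': "hyp (Sig (law M d X)) d W' s' \<sigma>'"
    using m2.model_hyp assms(3) by simp
  show ?thesis by (rule core[OF H H' Sig_sym psd])
qed


theorem lemma3:
  fixes M :: "'a measure" and M' :: "'b measure" and d :: nat
    and W W' :: "nat \<Rightarrow> nat \<Rightarrow> real"
    and X \<epsilon> :: "'a \<Rightarrow> nat \<Rightarrow> real" and X' \<epsilon>' :: "'b \<Rightarrow> nat \<Rightarrow> real"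
    and s s' :: "nat \<Rightarrow> real" and \<sigma> \<sigma>' :: real
  assumes "sem_model M d W X \<epsilon> s \<sigma>"
    and "sem_model M' d W' X' \<epsilon>' s' \<sigma>'"
    and "law M d X = law M' d X'"
  shows "\<forall>j < d + 2. \<forall>i < d + 2. W' j i = W j i"
    using assms by (rule main_result)

end
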